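(* Assume that all random variables $Z_i(j)$ are centered, i.e. $\mathbb{E}Z_i(j)=0$. Then for $l\in\mathbb{N}$ (with $l\geq1$), $p\geq2$, $p\geq l$ and $A\geq2$, \[ \mathbb{E}\left[Z-AM\frac{\log(2N)}{n}\right]_+^l\leq\left(2\left(\frac2A\right)^{p-1}+(l!)^{\frac1l}\sqrt{\frac2n}+\frac1A+\frac{lA}{n}\right)^lM^l. \]
   Context: Let $n,N$ be positive integers and $\mathcal{Z}_1,\dots,\mathcal{Z}_n$ probability spaces; all random variables live on the product space with the product measure. For $1\leq i\leq n$, $1\leq j\leq N$ let $Z_i(j):\mathcal{Z}_i\to\mathbb{R}$ be random variables (independent across $i$, not necessarily identically distributed), $Z:=\max_{1\leq j\leq N}\left|\frac1n\sum_{i=1}^nZ_i(j)\right|$. Let $\mathcal{E}_i:\mathcal{Z}_i\to\mathbb{R}$ satisfy $|Z_i(j)|\leq\mathcal{E}_i$ for all $i,j$, and assume there are $p\in[1,\infty)$ and $M>0$ with $\mathbb{E}\mathcal{E}_i^p\leq M^p$ for all $i$. Notation: $(x)_+^l:=(\max\{0,x\})^l$; $\log$ is the natural logarithm. *)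

theory Defs
  imports "HOL-Probability.Probability"
begin

definition maxmean :: "nat \<Rightarrow> nat \<Rightarrow> (nat \<Rightarrow> nat \<Rightarrow> 'a \<Rightarrow> real) \<Rightarrow> (nat \<Rightarrow> 'a) \<Rightarrow> real" where
  "maxmean n N Z w = Max ((\<lambda>j. \<bar>(1 / real n) * (\<Sum>i\<in>{1..n}. Z i j (w i))\<bar>) ` {1..N})"

end

theory Submission
  imports Defs
begin

lemma exp_le_quad1:
  fixes x :: real assumes "\<bar>x\<bar> \<le> 1" shows "exp x \<le> 1 + x + x^2"
proof (cases "x \<ge> 0")
  case True thus ?thesis using exp_bound assms by auto
next
  case False
  obtain t where t: "\<bar>t\<bar> \<le> \<bar>x\<bar>" "exp x = (\<Sum>m<3. x ^ m / fact m) + (exp t / fact 3) * x ^ 3"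
    using Maclaurin_exp_le[of x 3] by blast
  have "x^3 \<le> 0" using False zero_le_odd_power[of 3 x] by simp
  hence "(exp t / fact 3) * x ^ 3 \<le> 0" by (intro mult_nonneg_nonpos) auto
  moreover have "(\<Sum>m<3. x ^ m / fact m) = 1 + x + x^2/2" by (simp add: eval_nat_numeral)
  moreover have "0 \<le> x^2" by simp
  ultimately show ?thesis using t by linarith
qed

lemma e_le: "exp (1::real) \<le> 2.721"
proof -
  obtain t where t: "\<bar>t\<bar> \<le> \<bar>1::real\<bar>" "exp 1 = (\<Sum>m<6. (1::real) ^ m / fact m) + (exp t / fact 6) * 1 ^ 6"
    using Maclaurin_exp_le[of "1::real" 6] by blast
  have "exp t \<le> exp 1" using t(1) by simp
  moreover have "exp (1::real) \<le> 3" using exp_bound[of 1] by simp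
  moreover have "(\<Sum>m<6. (1::real) ^ m / fact m) = 1 + 1 + 1/2 + 1/6 + 1/24 + 1/120"
    by (simp add: eval_nat_numeral fact_numeral)
  moreover have "fact 6 = (720::real)" by (simp add: fact_numeral)
  ultimately show ?thesis using t(2) by (simp) 
qed

lemma exp_le_quad2:
  fixes x :: real assumes "\<bar>x\<bar> \<le> 2" shows "exp x \<le> 1 + x + 3/2 * x^2"
proof -
  obtain t where t: "\<bar>t\<bar> \<le> \<bar>x\<bar>" "exp x = (\<Sum>m<5. x ^ m / fact m) + (exp t / fact 5) * x ^ 5"
    using Maclaurin_exp_le[of x 5] by blast
  have s: "(\<Sum>m<5. x ^ m / fact m) = 1 + x + x^2/2 + x^3/6 + x^4/24" by (simp add: eval_nat_numeral fact_numeral)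
  have f5: "fact 5 = (120::real)" by (simp add: fact_numeral)
  show ?thesis
  proof (cases "x \<ge> 0")
    case True
    have et: "exp t \<le> 7.5"
    proof -
      have "exp t \<le> exp 2" using t(1) assms by simp
      also have "exp (2::real) = exp 1 * exp 1" by (simp flip: exp_add)
      also have "\<dots> \<le> 2.721 * 2.721" using e_le by (intro mult_mono) auto
      finally show ?thesis by simp
    qed
    have x3: "x^3 \<le> 2 * x^2" using True assms mult_right_mono[of x 2 "x*x"] by (simp add: power3_eq_cube power2_eq_square mult.commute)
    have x4: "x^4 \<le> 4 * x^2"
    proof -
      have "x^4 = x * x^3" by (simp add: eval_nat_numeral)
      also have "\<dots> \<le> 2 * x^3" using True assms by (intro mult_right_mono) auto
      finally show ?thesis using x3 by simp
    qed
    have x5: "x^5 \<le> 8 * x^2"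
    proof -
      have "x^5 = x * x^4" by (simp add: eval_nat_numeral)
      also have "\<dots> \<le> 2 * x^4" using True assms by (intro mult_right_mono) auto
      finally show ?thesis using x4 by simp
    qed
    have "exp t * x^5 \<le> 7.5 * (8 * x^2)" using et x5 True by (intro mult_mono) auto
    thus ?thesis using t(2) s f5 x3 x4 by simp
  next
    case False
    have x5: "x^5 \<le> 0" using False zero_le_odd_power[of 5 x] by simp
    have x3: "x^3 \<le> 0" using False zero_le_odd_power[of 3 x] by simp
    have x2: "x^2 \<le> 4"
    proof -
      have "x^2 = \<bar>x\<bar>^2" by simp
      also have "\<dots> \<le> 2^2" using assms by (intro power_mono) auto
      finally show ?thesis by simp
    qed
    have x4: "x^4 \<le> 4 * x^2" using mult_right_mono[OF x2, of "x^2"] by (simp add: power4_eq_xxxx power2_eq_square mult.assoc)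
    have "exp t * x^5 \<le> 0" using x5 by (simp add: mult_nonneg_nonpos)
    moreover have "exp x = 1 + x + x^2/2 + x^3/6 + x^4/24 + exp t * x^5/120" using t(2) s f5 by simp
    moreover have "0 \<le> x^2" by simp
    ultimately show ?thesis using x3 x4 by linarith
  qed
qed


lemma pow_lower:
  fixes a q :: real assumes "a > 0" "q \<ge> 0"
  shows "a^j + real j * q * a^(j-1) \<le> (a+q)^j"
proof (cases j)
  case 0 thus ?thesis by simp
next
  case (Suc k)
  have "1 + real j * (q/a) \<le> (1 + q/a)^j"
    by (rule Bernoulli_inequality) (use assms in \<open>simp add: field_simps\<close>)
  hence "a^j * (1 + real j * (q/a)) \<le> a^j * (1 + q/a)^j"
    using assms by (intro mult_left_mono) auto
  also have "a^j * (1 + q/a)^j = (a+q)^j"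
    using assms by (simp add: power_mult_distrib[symmetric] field_simps)
  also have "a^j * (1 + real j * (q/a)) = a^j + real j * q * a^(j-1)"
    using assms Suc by (simp add: field_simps)
  finally show ?thesis .
qed

lemma pow_diff:
  fixes a b :: real assumes "a > 0" "b \<ge> 0" "b \<le> a"
  shows "a^j - b^j \<le> real j * a^(j-1) * (a - b)"
proof (cases j)
  case 0 thus ?thesis by simp
next
  case (Suc k)
  have h1: "-1 \<le> -(a-b)/a" using assms by (simp add: le_divide_eq)
  have "1 + real j * (-(a-b)/a) \<le> (1 + (-(a-b)/a))^j"
    by (rule Bernoulli_inequality[OF h1])
  hence "a^j * (1 + real j * (-(a-b)/a)) \<le> a^j * (1 + (-(a-b)/a))^j"
    using assms by (intro mult_left_mono) auto
  also have "1 + (-(a-b)/a) = b / a" using assms by (simp add: field_simps)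
  also have "a^j * (b/a)^j = b^j" using assms by (simp add: power_divide)
  also have "a^j * (1 + real j * (-(a-b)/a)) = a^j - real j * (a - b) * (a^j / a)"
    using assms by (simp add: field_simps)
  also have "a^j / a = a^(j-1)" using assms Suc by simp
  finally show ?thesis by (simp add: mult_ac)
qed

lemma binom_step:
  fixes x q :: real assumes x: "x \<ge> 0" and q: "q \<ge> 0"
  shows "(x + real j)^j + q * (\<Sum>k<j. real (j choose k) * (x + real k)^k) \<le> (x + q + real j)^j"
proof (cases j)
  case 0 thus ?thesis by simp
next
  case (Suc m)
  define y where "y = x + real m"
  have y0: "y \<ge> 0" using x by (simp add: y_def)
  have "(\<Sum>k<j. real (j choose k) * (x + real k)^k) \<le> (\<Sum>k<j. real (j choose k) * y^k)"
    using Suc x by (intro sum_mono mult_left_mono power_mono) (auto simp: y_def)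
  also have "(\<Sum>k<j. real (j choose k) * y^k) = (y+1)^j - y^j"
  proof -
    have "(y+1)^j = (\<Sum>k\<le>j. real (j choose k) * y^k * 1^(j-k))" by (rule binomial_ring)
    also have "\<dots> = (\<Sum>k<j. real (j choose k) * y^k) + y^j"
      by (simp add: lessThan_Suc_atMost[symmetric])
    finally show ?thesis by simp
  qed
  also have "\<dots> \<le> real j * (y+1)^(j-1) * 1"
    using pow_diff[of "y+1" y j] y0 by simp
  also have "y + 1 = x + real j" using Suc by (simp add: y_def)
  finally have s: "(\<Sum>k<j. real (j choose k) * (x + real k)^k) \<le> real j * (x + real j)^(j-1)"
    by simp
  have "(x + real j)^j + q * (\<Sum>k<j. real (j choose k) * (x + real k)^k)
     \<le> (x + real j)^j + real j * q * (x + real j)^(j-1)"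
    using mult_left_mono[OF s q] by (simp add: mult_ac)
  also have "\<dots> \<le> (x + real j + q)^j"
    using pow_lower[of "x + real j" q j] x q Suc by simp
  finally show ?thesis by (simp add: add_ac)
qed

lemma pow3_convex:
  fixes x1 x2 x3 a1 a2 a3 :: real
  assumes "x1 \<ge> 0" "x2 \<ge> 0" "x3 \<ge> 0" "a1 \<ge> 0" "a2 \<ge> 0" "a3 \<ge> 0" "a1 + a2 + a3 = 1"
  shows "(a1*x1 + a2*x2 + a3*x3)^l \<le> a1*x1^l + a2*x2^l + a3*x3^l"
proof -
  have cv: "convex_on {0..} (\<lambda>x::real. x^l)"
    by (cases "even l") (auto intro: convex_on_subset[OF convex_power_even] convex_power_odd)
  define aa where "aa = (\<lambda>i::nat. if i = 0 then a1 else if i = 1 then a2 else a3)"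
  define yy where "yy = (\<lambda>i::nat. if i = 0 then x1 else if i = 1 then x2 else x3)"
  have "(\<lambda>x::real. x^l) (\<Sum>i\<in>{0,1,2}. aa i *\<^sub>R yy i) \<le> (\<Sum>i\<in>{0,1,2}. aa i * (yy i)^l)"
    by (rule convex_on_sum[OF _ _ cv]) (use assms in \<open>auto simp: aa_def yy_def\<close>)
  thus ?thesis by (simp add: aa_def yy_def add_ac)
qed

lemma pow_le_fact_exp:
  fixes y :: real assumes "y \<ge> 0" shows "y^l / fact l \<le> exp y"
proof -
  obtain t where t: "\<bar>t\<bar> \<le> \<bar>y\<bar>" "exp y = (\<Sum>m<Suc l. y ^ m / fact m) + (exp t / fact (Suc l)) * y ^ (Suc l)"
    using Maclaurin_exp_le[of y "Suc l"] by blast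
  have "y^l / fact l \<le> (\<Sum>m<Suc l. y ^ m / fact m)"
    by (rule member_le_sum[where f="\<lambda>m. y ^ m / fact m"]) (use assms in auto)
  moreover have "0 \<le> (exp t / fact (Suc l)) * y ^ (Suc l)" using assms by simp
  ultimately show ?thesis using t by linarith
qed

lemma young_sq:
  fixes x M p :: real assumes "x \<ge> 0" "M > 0" "p \<ge> 2"
  shows "x^2 \<le> (2/p) * (x powr p * M powr (2-p)) + (1 - 2/p) * M^2"
proof (cases "x = 0")
  case True thus ?thesis using assms by (simp add: field_simps)
next
  case False
  hence xp: "x > 0" using assms by simp
  have p0: "p > 0" using assms by simp
  have "(x powr p * M powr (2-p)) powr (2/p) * (M^2) powr (1 - 2/p) \<le> (2/p) * (x powr p * M powr (2-p)) + (1 - 2/p) * M^2"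
    using assms xp by (intro Youngs_inequality_0) auto
  moreover have "(x powr p * M powr (2-p)) powr (2/p) * (M^2) powr (1 - 2/p) = x^2"
  proof -
    have e1: "(x powr p * M powr (2-p)) powr (2/p) = (x powr p) powr (2/p) * (M powr (2-p)) powr (2/p)"
      by (rule powr_mult)
    have e2: "(x powr p) powr (2/p) = x powr 2"
    proof -
      have "(x powr p) powr (2/p) = x powr (p * (2/p))" by (rule powr_powr)
      also have "p * (2/p) = 2" using p0 by simp
      finally show ?thesis .
    qed
    have e3: "(M powr (2-p)) powr (2/p) = M powr ((2-p)*(2/p))" by (rule powr_powr)
    have e4: "(M^2) powr (1 - 2/p) = M powr (2 * (1 - 2/p))"
    proof -
      have "M^2 = M powr 2" using assms by (simp add: powr_realpow)
      hence "(M^2) powr (1 - 2/p) = (M powr 2) powr (1 - 2/p)" by simp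
      also have "\<dots> = M powr (2 * (1 - 2/p))" by (rule powr_powr)
      finally show ?thesis .
    qed
    have e5: "(2-p)*(2/p) + 2 * (1 - 2/p) = 0" using p0 by (simp add: field_simps)
    have e6: "M powr ((2-p)*(2/p)) * M powr (2 * (1 - 2/p)) = 1"
    proof -
      have "M powr ((2-p)*(2/p)) * M powr (2 * (1 - 2/p)) = M powr ((2-p)*(2/p) + 2 * (1 - 2/p))"
        by (rule powr_add[symmetric])
      also have "\<dots> = 1" using e5 assms by simp
      finally show ?thesis .
    qed
    have e7: "x powr 2 = x^2" using xp by (simp add: powr_realpow)
    have "(x powr p * M powr (2-p)) powr (2/p) * (M^2) powr (1 - 2/p)
       = x powr 2 * (M powr ((2-p)*(2/p)) * M powr (2 * (1 - 2/p)))"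
      unfolding e1 e2 e3 e4 by (simp only: mult.assoc)
    thus ?thesis unfolding e6 e7 by simp
  qed
  ultimately show ?thesis by simp
qed


lemma powr_tail_bound:
  fixes e T p :: real and m :: nat
  assumes "T > 0" "T < e" "real m \<le> p"
  shows "e ^ m \<le> T powr (real m - p) * e powr p"
proof -
  have e0: "e > 0" using assms by simp
  have "e ^ m = e powr real m" using e0 by (simp add: powr_realpow)
  also have "\<dots> = e powr p * e powr (real m - p)" by (simp flip: powr_add)
  also have "e powr (real m - p) \<le> T powr (real m - p)"
    using assms by (intro powr_mono2') auto
  hence "e powr p * e powr (real m - p) \<le> e powr p * T powr (real m - p)"
    by (intro mult_left_mono) auto
  finally show ?thesis by (simp add: mult.commute)
qed

lemma Tq_eq:
  fixes T M p :: real and m :: nat assumes "T > 0" "M > 0"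
  shows "T powr (real m - p) * M powr p = T^m * (M/T) powr p"
proof -
  have "T powr (real m - p) = T powr real m / T powr p" by (rule powr_diff)
  moreover have "(M/T) powr p = M powr p / T powr p" using assms by (simp add: powr_divide)
  moreover have "T powr real m = T^m" using assms by (simp add: powr_realpow)
  ultimately show ?thesis by simp
qed

lemma W_moment:
  fixes Q :: "'a measure" and E :: "'a \<Rightarrow> real"
  assumes Em: "E \<in> borel_measurable Q"
    and mom: "(\<integral>\<^sup>+ x. ennreal (E x powr p) \<partial>Q) \<le> ennreal (M powr p)"
    and T: "T > 0" and M: "M > 0" and mp: "real m \<le> p" and m1: "m \<ge> 1"
  shows "(\<integral>\<^sup>+ x. ennreal ((if T < E x then E x else 0) ^ m) \<partial>Q) \<le> ennreal (T^m * (M/T) powr p)"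
proof -
  have "(\<integral>\<^sup>+ x. ennreal ((if T < E x then E x else 0) ^ m) \<partial>Q)
      \<le> (\<integral>\<^sup>+ x. ennreal (T powr (real m - p)) * ennreal (E x powr p) \<partial>Q)"
  proof (rule nn_integral_mono)
    fix x
    show "ennreal ((if T < E x then E x else 0) ^ m) \<le> ennreal (T powr (real m - p)) * ennreal (E x powr p)"
    proof (cases "T < E x")
      case True
      have "ennreal (E x ^ m) \<le> ennreal (T powr (real m - p) * E x powr p)"
        by (rule ennreal_leI) (rule powr_tail_bound[OF T True mp])
      also have "\<dots> = ennreal (T powr (real m - p)) * ennreal (E x powr p)"
        by (rule ennreal_mult) auto
      finally show ?thesis using True by simp
    next
      case False
      thus ?thesis using m1 by (simp add: zero_power)
    qed
  qed
  also have "\<dots> = ennreal (T powr (real m - p)) * (\<integral>\<^sup>+ x. ennreal (E x powr p) \<partial>Q)"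
    using Em by (intro nn_integral_cmult) measurable
  also have "\<dots> \<le> ennreal (T powr (real m - p)) * ennreal (M powr p)"
    using mom by (intro mult_left_mono) auto
  also have "\<dots> = ennreal (T^m * (M/T) powr p)"
    using Tq_eq[OF T M, of m p] by (simp flip: ennreal_mult)
  finally show ?thesis .
qed

lemma binom_T:
  fixes T q x :: real assumes T: "T \<ge> 0" and q: "q \<ge> 0" and x: "x \<ge> 0"
  shows "(\<Sum>k\<le>j. real (j choose k) * (if k = j then 1 else T^(j-k) * q) * (T*(x + real k))^k)
     \<le> (T*(x + q + real j))^j"
proof -
  have "(\<Sum>k\<le>j. real (j choose k) * (if k = j then 1 else T^(j-k) * q) * (T*(x + real k))^k)
      = (\<Sum>k<j. real (j choose k) * (if k = j then 1 else T^(j-k) * q) * (T*(x + real k))^k)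
        + (T*(x + real j))^j"
    by (simp add: lessThan_Suc_atMost[symmetric])
  also have "(\<Sum>k<j. real (j choose k) * (if k = j then 1 else T^(j-k) * q) * (T*(x + real k))^k)
      = T^j * (q * (\<Sum>k<j. real (j choose k) * (x + real k)^k))"
  proof -
    have "(\<Sum>k<j. real (j choose k) * (if k = j then 1 else T^(j-k) * q) * (T*(x + real k))^k)
        = (\<Sum>k<j. T^j * (q * (real (j choose k) * (x + real k)^k)))"
    proof (rule sum.cong[OF refl])
      fix k assume "k \<in> {..<j}"
      hence k: "k < j" by simp
      have "T^(j-k) * T^k = T^j" using k by (simp flip: power_add)
      thus "real (j choose k) * (if k = j then 1 else T^(j-k) * q) * (T*(x + real k))^k
          = T^j * (q * (real (j choose k) * (x + real k)^k))"
        using k by (simp add: power_mult_distrib mult_ac)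
    qed
    thus ?thesis by (simp add: sum_distrib_left)
  qed
  also have "(T*(x + real j))^j = T^j * (x + real j)^j" by (simp add: power_mult_distrib)
  finally have "(\<Sum>k\<le>j. real (j choose k) * (if k = j then 1 else T^(j-k) * q) * (T*(x + real k))^k)
      = T^j * ((x + real j)^j + q * (\<Sum>k<j. real (j choose k) * (x + real k)^k))"
    by (simp add: algebra_simps)
  also have "\<dots> \<le> T^j * (x + q + real j)^j"
    using binom_step[OF x q, of j] T by (intro mult_left_mono) auto
  also have "\<dots> = (T*(x + q + real j))^j" by (simp add: power_mult_distrib)
  finally show ?thesis .
qed

lemma coord_facts:
  fixes Q :: "'a measure" and Z E :: "'a \<Rightarrow> real"
  assumes Q: "prob_space Q"
    and Zm: "Z \<in> borel_measurable Q" and Em: "E \<in> borel_measurable Q"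
    and env: "\<And>x. x \<in> space Q \<Longrightarrow> \<bar>Z x\<bar> \<le> E x"
    and mom: "(\<integral>\<^sup>+ x. ennreal (E x powr p) \<partial>Q) \<le> ennreal (M powr p)"
    and cen: "(\<integral> x. Z x \<partial>Q) = 0"
    and T: "T > 0" and M: "M > 0" and p: "p \<ge> 2"
  shows "\<bar>\<integral> x. (if E x \<le> T then Z x else 0) \<partial>Q\<bar> \<le> T * (M/T) powr p"
    and "integrable Q (\<lambda>x. if E x \<le> T then Z x else 0)"
    and "(\<integral> x. (if E x \<le> T then Z x else 0)^2 \<partial>Q) \<le> M^2"
proof -
  interpret prob_space Q by (rule Q)
  define a where "a = (\<lambda>x. if E x \<le> T then Z x else 0)"
  define W where "W = (\<lambda>x. if T < E x then E x else 0)"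
  have E0: "\<And>x. x \<in> space Q \<Longrightarrow> 0 \<le> E x" using env by (meson abs_ge_zero order.trans)
  have am[measurable]: "a \<in> borel_measurable Q" unfolding a_def using Zm Em by measurable
  have Wm[measurable]: "W \<in> borel_measurable Q" unfolding W_def using Em by measurable
  have Epm[measurable]: "(\<lambda>x. E x powr p) \<in> borel_measurable Q" using Em by measurable
  have aT: "\<bar>a x\<bar> \<le> T" if x: "x \<in> space Q" for x
    using env[OF x] T unfolding a_def by (cases "E x \<le> T") auto
  show ai: "integrable Q (\<lambda>x. if E x \<le> T then Z x else 0)"
    unfolding a_def[symmetric] using aT by (intro integrable_const_bound[where B=T]) auto
  have Zi: "integrable Q Z"
  proof (rule integrableI_bounded)
    show "Z \<in> borel_measurable Q" by (rule Zm)
    have "(\<integral>\<^sup>+x. ennreal (norm (Z x)) \<partial>Q) \<le> (\<integral>\<^sup>+x. ennreal 1 + ennreal (E x powr p) \<partial>Q)"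
    proof (rule nn_integral_mono)
      fix x assume x: "x \<in> space Q"
      have "\<bar>Z x\<bar> \<le> 1 + E x powr p"
      proof (cases "E x \<le> 1")
        case True
        have "0 \<le> E x powr p" by simp
        thus ?thesis using env[OF x] True by linarith
      next
        case False
        hence "E x = E x powr 1" by simp
        also have "\<dots> \<le> E x powr p" using False p by (intro powr_mono) auto
        finally show ?thesis using env[OF x] by simp
      qed
      hence "ennreal (norm (Z x)) \<le> ennreal (1 + E x powr p)" by (intro ennreal_leI) simp
      also have "\<dots> = ennreal 1 + ennreal (E x powr p)" by (rule ennreal_plus) auto
      finally show "ennreal (norm (Z x)) \<le> ennreal 1 + ennreal (E x powr p)" .
    qed
    also have "\<dots> = ennreal 1 + (\<integral>\<^sup>+x. ennreal (E x powr p) \<partial>Q)"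
      by (subst nn_integral_add) (auto simp: emeasure_space_1)
    also have "\<dots> \<le> ennreal 1 + ennreal (M powr p)" using mom by (rule add_left_mono)
    also have "\<dots> < \<infinity>" by simp
    finally show "(\<integral>\<^sup>+x. ennreal (norm (Z x)) \<partial>Q) < \<infinity>" .
  qed
  have ai': "integrable Q a" using ai unfolding a_def .
  have "(\<integral> x. a x \<partial>Q) = - (\<integral> x. Z x - a x \<partial>Q)"
    using Zi ai' cen by simp
  hence "ennreal \<bar>\<integral> x. a x \<partial>Q\<bar> = ennreal (norm (\<integral> x. Z x - a x \<partial>Q))" by simp
  also have "\<dots> \<le> (\<integral>\<^sup>+x. ennreal (norm (Z x - a x)) \<partial>Q)"
    using Zi ai' by (intro integral_norm_bound_ennreal) auto
  also have "\<dots> \<le> (\<integral>\<^sup>+x. ennreal (W x ^ 1) \<partial>Q)"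
    by (intro nn_integral_mono ennreal_leI) (auto simp: a_def W_def env)
  also have "\<dots> \<le> ennreal (T^1 * (M/T) powr p)"
    unfolding W_def by (rule W_moment[OF Em mom T M]) (use p in auto)
  finally show "\<bar>\<integral> x. (if E x \<le> T then Z x else 0) \<partial>Q\<bar> \<le> T * (M/T) powr p"
    unfolding a_def using T by (subst (asm) ennreal_le_iff) auto
  have "ennreal (\<integral> x. (a x)^2 \<partial>Q) = (\<integral>\<^sup>+x. ennreal ((a x)^2) \<partial>Q)"
  proof (intro nn_integral_eq_integral[symmetric] integrable_const_bound[where B="T^2"])
    have "(a x)^2 \<le> T^2" if "x \<in> space Q" for x
      using power_mono[OF aT[OF that] abs_ge_zero, of 2] by simp
    thus "AE x in Q. norm ((a x)^2) \<le> T^2" by auto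
  qed auto
  also have "\<dots> \<le> (\<integral>\<^sup>+x. ennreal ((2/p) * M powr (2-p)) * ennreal (E x powr p) + ennreal ((1 - 2/p) * M^2) \<partial>Q)"
  proof (rule nn_integral_mono)
    fix x assume x: "x \<in> space Q"
    have "(a x)^2 \<le> (E x)^2"
    proof -
      have "\<bar>a x\<bar> \<le> E x" using env[OF x] E0[OF x] unfolding a_def by auto
      from power_mono[OF this abs_ge_zero, of 2] show ?thesis by simp
    qed
    also have "\<dots> \<le> (2/p) * (E x powr p * M powr (2-p)) + (1 - 2/p) * M^2"
      by (rule young_sq[OF E0[OF x] M p])
    finally have ax2: "(a x)^2 \<le> (2/p) * M powr (2-p) * E x powr p + (1 - 2/p) * M^2" by (simp add: mult_ac)
    thus "ennreal ((a x)^2) \<le> ennreal ((2/p) * M powr (2-p)) * ennreal (E x powr p) + ennreal ((1 - 2/p) * M^2)"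
    proof -
      have "0 \<le> (2/p) * M powr (2-p)" "0 \<le> E x powr p" "0 \<le> (1 - 2/p) * M^2" using p by auto
      note nn = this
      have "ennreal ((a x)^2) \<le> ennreal ((2/p) * M powr (2-p) * E x powr p + (1 - 2/p) * M^2)"
        by (rule ennreal_leI) (rule ax2)
      also have "\<dots> = ennreal ((2/p) * M powr (2-p) * E x powr p) + ennreal ((1 - 2/p) * M^2)"
        by (rule ennreal_plus[OF mult_nonneg_nonneg[OF nn(1) nn(2)] nn(3)])
      also have "ennreal ((2/p) * M powr (2-p) * E x powr p) = ennreal ((2/p) * M powr (2-p)) * ennreal (E x powr p)"
        by (rule ennreal_mult) (use nn in auto)
      finally show ?thesis .
    qed
  qed
  also have "\<dots> = ennreal ((2/p) * M powr (2-p)) * (\<integral>\<^sup>+x. ennreal (E x powr p) \<partial>Q) + ennreal ((1 - 2/p) * M^2)"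
  proof -
    have m1: "(\<lambda>x. ennreal ((2/p) * M powr (2-p)) * ennreal (E x powr p)) \<in> borel_measurable Q" by measurable
    have "(\<integral>\<^sup>+x. ennreal ((2/p) * M powr (2-p)) * ennreal (E x powr p) + ennreal ((1 - 2/p) * M^2) \<partial>Q)
       = (\<integral>\<^sup>+x. ennreal ((2/p) * M powr (2-p)) * ennreal (E x powr p) \<partial>Q) + (\<integral>\<^sup>+x. ennreal ((1 - 2/p) * M^2) \<partial>Q)"
      by (rule nn_integral_add[OF m1]) simp
    also have "(\<integral>\<^sup>+x. ennreal ((2/p) * M powr (2-p)) * ennreal (E x powr p) \<partial>Q) = ennreal ((2/p) * M powr (2-p)) * (\<integral>\<^sup>+x. ennreal (E x powr p) \<partial>Q)"
      by (rule nn_integral_cmult) measurable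
    also have "(\<integral>\<^sup>+x. ennreal ((1 - 2/p) * M^2) \<partial>Q) = ennreal ((1 - 2/p) * M^2)"
      by (simp add: emeasure_space_1)
    finally show ?thesis .
  qed
  also have "\<dots> \<le> ennreal ((2/p) * M powr (2-p)) * ennreal (M powr p) + ennreal ((1 - 2/p) * M^2)"
    proof -
      have "ennreal ((2/p) * M powr (2-p)) * (\<integral>\<^sup>+x. ennreal (E x powr p) \<partial>Q) \<le> ennreal ((2/p) * M powr (2-p)) * ennreal (M powr p)"
        using mom by (rule mult_left_mono) (rule zero_le)
      thus ?thesis by (rule add_right_mono)
    qed
  also have "\<dots> = ennreal (M^2)"
  proof -
    have "M powr (2-p) * M powr p = M powr (2 - p + p)" by (rule powr_add[symmetric])
    also have "\<dots> = M powr 2" by simp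
    also have "\<dots> = M^2" using powr_realpow[OF M, of 2] by simp
    finally have "M powr (2-p) * M powr p = M^2" .
    hence "(2/p) * M powr (2-p) * M powr p = (2/p) * M^2" by (simp add: mult.assoc)
    hence eqM: "(2/p) * M powr (2-p) * M powr p + (1 - 2/p) * M^2 = M^2" by (simp add: left_diff_distrib)
    have "0 \<le> (2/p) * M powr (2-p)" "0 \<le> M powr p" "0 \<le> (1 - 2/p) * M^2" using p by auto
    note nn = this
    have "ennreal ((2/p) * M powr (2-p)) * ennreal (M powr p) = ennreal ((2/p) * M powr (2-p) * M powr p)"
      by (rule ennreal_mult[symmetric]) (use nn in auto)
    also have "\<dots> + ennreal ((1 - 2/p) * M^2) = ennreal ((2/p) * M powr (2-p) * M powr p + (1 - 2/p) * M^2)"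
      by (rule ennreal_plus[symmetric]) (use nn mult_nonneg_nonneg[OF nn(1,2)] in auto)
    finally show ?thesis using eqM by simp
  qed
  finally show "(\<integral> x. (if E x \<le> T then Z x else 0)^2 \<partial>Q) \<le> M^2"
    unfolding a_def by (subst (asm) ennreal_le_iff) auto
qed

lemma coord_mgf:
  fixes Q :: "'a measure" and a :: "'a \<Rightarrow> real"
  assumes Q: "prob_space Q"
    and am[measurable]: "a \<in> borel_measurable Q"
    and aT: "\<And>x. x \<in> space Q \<Longrightarrow> \<bar>a x\<bar> \<le> T"
    and a2: "(\<integral> x. (a x)^2 \<partial>Q) \<le> M^2"
    and expb: "\<And>y. \<bar>y\<bar> \<le> \<kappa> \<Longrightarrow> exp y \<le> 1 + y + C * y^2"
    and C: "C \<ge> 0" and s: "\<bar>s\<bar> * (2*T) \<le> \<kappa>"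
  shows "(\<integral>\<^sup>+ x. ennreal (exp (s * (a x - (\<integral> y. a y \<partial>Q)))) \<partial>Q) \<le> ennreal (exp (C * s^2 * M^2))"
proof -
  interpret prob_space Q by (rule Q)
  define \<mu> where "\<mu> = (\<integral> y. a y \<partial>Q)"
  have T0: "T \<ge> 0" using aT[of "SOME x. x \<in> space Q"] not_empty some_in_eq by (metis abs_ge_zero order.trans)
  have ai: "integrable Q a" using aT by (intro integrable_const_bound[where B=T]) auto
  have a2i: "integrable Q (\<lambda>x. (a x)^2)"
  proof (intro integrable_const_bound[where B="T^2"])
    have "(a x)^2 \<le> T^2" if "x \<in> space Q" for x
      using power_mono[OF aT[OF that] abs_ge_zero, of 2] by simp
    thus "AE x in Q. norm ((a x)^2) \<le> T^2" by auto
  qed auto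
  have muT: "\<bar>\<mu>\<bar> \<le> T"
  proof -
    have "\<bar>\<mu>\<bar> \<le> (\<integral> y. \<bar>a y\<bar> \<partial>Q)" unfolding \<mu>_def by (rule integral_abs_bound)
    also have "\<dots> \<le> (\<integral> y. T \<partial>Q)" using ai aT by (intro integral_mono) auto
    finally show ?thesis by (simp add: prob_space)
  qed
  define f where "f = (\<lambda>x. 1 + s * (a x - \<mu>) + C * s^2 * (a x - \<mu>)^2)"
  have fm[measurable]: "f \<in> borel_measurable Q" unfolding f_def by measurable
  have pt: "exp (s * (a x - \<mu>)) \<le> f x" if x: "x \<in> space Q" for x
  proof -
    have "\<bar>a x - \<mu>\<bar> \<le> 2 * T" using aT[OF x] muT by linarith
    hence "\<bar>s\<bar> * \<bar>a x - \<mu>\<bar> \<le> \<bar>s\<bar> * (2*T)" by (intro mult_left_mono) auto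
    hence "\<bar>s * (a x - \<mu>)\<bar> \<le> \<kappa>" using s by (simp add: abs_mult)
    from expb[OF this] show ?thesis unfolding f_def by (simp add: power_mult_distrib mult_ac)
  qed
  have fint: "integrable Q f" unfolding f_def using ai a2i
    by (simp add: power2_diff algebra_simps)
  have "(\<integral>\<^sup>+ x. ennreal (exp (s * (a x - \<mu>))) \<partial>Q) \<le> (\<integral>\<^sup>+ x. ennreal (f x) \<partial>Q)"
    using pt by (intro nn_integral_mono ennreal_leI) auto
  also have "\<dots> = ennreal (\<integral> x. f x \<partial>Q)"
  proof (rule nn_integral_eq_integral[OF fint])
    show "AE x in Q. 0 \<le> f x" using pt by (auto intro: order.trans[OF exp_ge_zero])
  qed
  also have "(\<integral> x. f x \<partial>Q) = 1 + C * s^2 * ((\<integral> x. (a x)^2 \<partial>Q) - \<mu>^2)"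
    unfolding f_def using ai a2i
    by (simp add: power2_diff algebra_simps \<mu>_def[symmetric] power2_eq_square prob_space)
  also have "\<dots> \<le> 1 + C * s^2 * M^2"
  proof -
    have "(\<integral> x. (a x)^2 \<partial>Q) - \<mu>^2 \<le> M^2" using a2 by (smt (verit) zero_le_power2)
    thus ?thesis using C by (intro add_left_mono mult_left_mono) auto
  qed
  also have "\<dots> \<le> exp (C * s^2 * M^2)" by (rule exp_ge_add_one_self)
  finally show ?thesis unfolding \<mu>_def by (simp add: ennreal_leI)
qed

lemma prod_mono_ennreal:
  fixes f g :: "'b \<Rightarrow> ennreal"
  shows "(\<And>i. i \<in> A \<Longrightarrow> f i \<le> g i) \<Longrightarrow> prod f A \<le> prod g A"
  by (induct A rule: infinite_finite_induct) (auto intro!: mult_mono)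

lemma (in product_prob_space) prod_mgf:
  assumes fin: "finite I" and gm: "\<And>i. i \<in> I \<Longrightarrow> g i \<in> borel_measurable (M i)"
    and gb: "\<And>i. i \<in> I \<Longrightarrow> (\<integral>\<^sup>+x. ennreal (exp (g i x)) \<partial>M i) \<le> ennreal B"
  shows "(\<integral>\<^sup>+x. ennreal (exp (\<Sum>i\<in>I. g i (x i))) \<partial>PiM I M) \<le> ennreal B ^ card I"
proof -
  have "(\<integral>\<^sup>+x. ennreal (exp (\<Sum>i\<in>I. g i (x i))) \<partial>PiM I M) = (\<integral>\<^sup>+x. (\<Prod>i\<in>I. ennreal (exp (g i (x i)))) \<partial>PiM I M)"
    using fin by (intro nn_integral_cong) (simp add: exp_sum prod_ennreal)
  also have "\<dots> = (\<Prod>i\<in>I. (\<integral>\<^sup>+x. ennreal (exp (g i x)) \<partial>M i))"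
    by (rule product_nn_integral_prod[OF fin]) (use gm in measurable)
  also have "\<dots> \<le> (\<Prod>i\<in>I. ennreal B)"
    by (rule prod_mono_ennreal) (use gb in auto)
  finally show ?thesis by simp
qed

lemma (in product_prob_space) sum_moment:
  fixes W :: "'i \<Rightarrow> 'a \<Rightarrow> real"
  assumes fin: "finite I"
    and Wm: "\<And>i. i \<in> I \<Longrightarrow> W i \<in> borel_measurable (M i)"
    and W0: "\<And>i x. i \<in> I \<Longrightarrow> x \<in> space (M i) \<Longrightarrow> 0 \<le> W i x"
    and mom: "\<And>i m. i \<in> I \<Longrightarrow> 1 \<le> m \<Longrightarrow> m \<le> L \<Longrightarrow> (\<integral>\<^sup>+x. ennreal (W i x ^ m) \<partial>M i) \<le> ennreal (T^m * q)"
    and T: "T \<ge> 0" and q: "q \<ge> 0"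
  shows "j \<le> L \<Longrightarrow> (\<integral>\<^sup>+x. ennreal ((\<Sum>i\<in>I. W i (x i))^j) \<partial>PiM I M) \<le> ennreal ((T * (real (card I) * q + real j))^j)"
using fin Wm W0 mom proof (induction I arbitrary: j rule: finite_induct)
  case empty
  have "(\<integral>\<^sup>+x. ennreal ((\<Sum>i\<in>{}. W i (x i))^j) \<partial>PiM {} M) = ennreal (0^j)"
    by (subst nn_integral_empty) auto
  also have "\<dots> \<le> ennreal ((T * (real (card {}) * q + real j))^j)"
    using T by (cases j) auto
  finally show ?case .
next
  case (insert i I)
  have jL: "j \<le> L" using insert.prems(1) .
  have IH: "(\<integral>\<^sup>+x. ennreal ((\<Sum>i\<in>I. W i (x i))^j') \<partial>PiM I M) \<le> ennreal ((T * (real (card I) * q + real j'))^j')"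
    if "j' \<le> L" for j'
    by (rule insert.IH) (use that insert.prems in auto)
  have Wm': "\<And>k. k \<in> insert i I \<Longrightarrow> W k \<in> borel_measurable (M k)" using insert.prems(2) by auto
  have W0': "\<And>k x. k \<in> insert i I \<Longrightarrow> x \<in> space (M k) \<Longrightarrow> 0 \<le> W k x" using insert.prems(3) by auto
  have mS: "(\<lambda>x. \<Sum>k\<in>J. W k (x k)) \<in> borel_measurable (PiM J' M)" if "J \<subseteq> J'" "J \<subseteq> insert i I" for J J'
  proof (intro borel_measurable_sum)
    fix k assume k: "k \<in> J"
    have "W k \<in> borel_measurable (M k)" using Wm' that k by auto
    moreover have "(\<lambda>x. x k) \<in> measurable (PiM J' M) (M k)" using that k by (intro measurable_component_singleton) auto
    ultimately show "(\<lambda>x. W k (x k)) \<in> borel_measurable (PiM J' M)" by (rule measurable_compose[rotated])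
  qed
  define S where "S = (\<lambda>x. \<Sum>k\<in>I. W k (x k))"
  have S0: "0 \<le> S x" if "x \<in> space (PiM I M)" for x
    unfolding S_def using that W0' by (intro sum_nonneg) (auto simp: space_PiM PiE_iff)
  define b where "b = (\<lambda>m::nat. if m = 0 then 1 else T^m * q)"
  have b0: "b m \<ge> 0" for m using T q by (simp add: b_def)
  have Wb: "(\<integral>\<^sup>+y. ennreal (W i y ^ m) \<partial>M i) \<le> ennreal (b m)" if "m \<le> j" "j \<le> L" for m
  proof (cases "m = 0")
    case True thus ?thesis by (simp add: b_def M.emeasure_space_1)
  next
    case False thus ?thesis using insert.prems(4)[of i m] that by (simp add: b_def)
  qed
  show ?case
  proof -
    have m1: "(\<lambda>x. ennreal ((\<Sum>k\<in>insert i I. W k (x k))^j)) \<in> borel_measurable (PiM (insert i I) M)"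
      using mS[of "insert i I" "insert i I"] by measurable
    have "(\<integral>\<^sup>+x. ennreal ((\<Sum>k\<in>insert i I. W k (x k))^j) \<partial>PiM (insert i I) M)
        = (\<integral>\<^sup>+x. (\<integral>\<^sup>+y. ennreal ((\<Sum>k\<in>insert i I. W k ((x(i:=y)) k))^j) \<partial>M i) \<partial>PiM I M)"
      by (rule product_nn_integral_insert[OF insert.hyps(1,2) m1])
    also have "\<dots> \<le> (\<integral>\<^sup>+x. ennreal (\<Sum>k\<le>j. real (j choose k) * b (j-k) * (S x)^k) \<partial>PiM I M)"
    proof (rule nn_integral_mono)
      fix x assume x: "x \<in> space (PiM I M)"
      have eq: "(\<Sum>k\<in>insert i I. W k ((x(i:=y)) k)) = S x + W i y" for y
      proof -
        have "(\<Sum>k\<in>I. W k ((x(i:=y)) k)) = S x"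
          unfolding S_def using insert.hyps by (intro sum.cong) auto
        thus ?thesis using insert.hyps by (simp add: add.commute)
      qed
      have "(\<integral>\<^sup>+y. ennreal ((\<Sum>k\<in>insert i I. W k ((x(i:=y)) k))^j) \<partial>M i)
          = (\<integral>\<^sup>+y. (\<Sum>k\<le>j. ennreal (real (j choose k) * (S x)^k) * ennreal (W i y ^ (j-k))) \<partial>M i)"
      proof (rule nn_integral_cong)
        fix y assume y: "y \<in> space (M i)"
        have Wy: "0 \<le> W i y" using W0'[of i y] y by auto
        have "(S x + W i y)^j = (\<Sum>k\<le>j. real (j choose k) * (S x)^k * (W i y)^(j-k))"
          by (rule binomial_ring)
        hence "ennreal ((S x + W i y)^j) = (\<Sum>k\<le>j. ennreal (real (j choose k) * (S x)^k * (W i y)^(j-k)))"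
          using S0[OF x] Wy by (simp add: sum_ennreal)
        also have "\<dots> = (\<Sum>k\<le>j. ennreal (real (j choose k) * (S x)^k) * ennreal (W i y ^ (j-k)))"
          using S0[OF x] Wy by (intro sum.cong refl) (simp add: ennreal_mult)
        finally have r: "ennreal ((S x + W i y)^j) = (\<Sum>k\<le>j. ennreal (real (j choose k) * (S x)^k) * ennreal (W i y ^ (j-k)))" .
        show "ennreal ((\<Sum>k\<in>insert i I. W k ((x(i:=y)) k))^j) = (\<Sum>k\<le>j. ennreal (real (j choose k) * (S x)^k) * ennreal (W i y ^ (j-k)))"
          unfolding eq by (rule r)
      qed
      also have "\<dots> = (\<Sum>k\<le>j. ennreal (real (j choose k) * (S x)^k) * (\<integral>\<^sup>+y. ennreal (W i y ^ (j-k)) \<partial>M i))"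
        using Wm'[of i] by (subst nn_integral_sum) (auto intro!: sum.cong nn_integral_cmult)
      also have "\<dots> \<le> (\<Sum>k\<le>j. ennreal (real (j choose k) * (S x)^k) * ennreal (b (j-k)))"
        using Wb jL by (intro sum_mono mult_left_mono) auto
      also have "\<dots> = ennreal (\<Sum>k\<le>j. real (j choose k) * b (j-k) * (S x)^k)"
        using S0[OF x] b0 by (simp add: ennreal_mult[symmetric] sum_ennreal mult_ac)
      finally show "(\<integral>\<^sup>+y. ennreal ((\<Sum>k\<in>insert i I. W k ((x(i:=y)) k))^j) \<partial>M i)
          \<le> ennreal (\<Sum>k\<le>j. real (j choose k) * b (j-k) * (S x)^k)" .
    qed
    also have "\<dots> = (\<integral>\<^sup>+x. (\<Sum>k\<le>j. ennreal (real (j choose k) * b (j-k)) * ennreal ((S x)^k)) \<partial>PiM I M)"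
    proof (rule nn_integral_cong)
      fix x assume x: "x \<in> space (PiM I M)"
      show "ennreal (\<Sum>k\<le>j. real (j choose k) * b (j-k) * (S x)^k) = (\<Sum>k\<le>j. ennreal (real (j choose k) * b (j-k)) * ennreal ((S x)^k))"
        using S0[OF x] b0 by (simp add: ennreal_mult[symmetric] sum_ennreal)
    qed
    also have "\<dots> = (\<Sum>k\<le>j. ennreal (real (j choose k) * b (j-k)) * (\<integral>\<^sup>+x. ennreal ((S x)^k) \<partial>PiM I M))"
    proof -
      have Sm[measurable]: "S \<in> borel_measurable (PiM I M)" unfolding S_def using mS[of I I] by auto
      have "(\<integral>\<^sup>+x. (\<Sum>k\<le>j. ennreal (real (j choose k) * b (j-k)) * ennreal ((S x)^k)) \<partial>PiM I M)
          = (\<Sum>k\<le>j. (\<integral>\<^sup>+x. ennreal (real (j choose k) * b (j-k)) * ennreal ((S x)^k) \<partial>PiM I M))"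
        by (rule nn_integral_sum) measurable
      also have "\<dots> = (\<Sum>k\<le>j. ennreal (real (j choose k) * b (j-k)) * (\<integral>\<^sup>+x. ennreal ((S x)^k) \<partial>PiM I M))"
        by (intro sum.cong refl nn_integral_cmult) measurable
      finally show ?thesis .
    qed
    also have "\<dots> \<le> (\<Sum>k\<le>j. ennreal (real (j choose k) * b (j-k)) * ennreal ((T * (real (card I) * q + real k))^k))"
      using IH jL unfolding S_def by (intro sum_mono mult_left_mono) auto
    also have "\<dots> = ennreal (\<Sum>k\<le>j. real (j choose k) * b (j-k) * (T * (real (card I) * q + real k))^k)"
      using b0 T q by (simp add: ennreal_mult[symmetric] sum_ennreal)
    also have "\<dots> \<le> ennreal ((T * (real (card I) * q + q + real j))^j)"
    proof (rule ennreal_leI)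
      have "(\<Sum>k\<le>j. real (j choose k) * b (j-k) * (T * (real (card I) * q + real k))^k)
          = (\<Sum>k\<le>j. real (j choose k) * (if k = j then 1 else T^(j-k) * q) * (T*(real (card I) * q + real k))^k)"
        by (intro sum.cong refl) (auto simp: b_def)
      also have "\<dots> \<le> (T * (real (card I) * q + q + real j))^j"
        using binom_T[OF T q, of "real (card I) * q" j] q by simp
      finally show "(\<Sum>k\<le>j. real (j choose k) * b (j-k) * (T * (real (card I) * q + real k))^k) \<le> (T * (real (card I) * q + q + real j))^j" .
    qed
    finally have fin1: "(\<integral>\<^sup>+x. ennreal ((\<Sum>k\<in>insert i I. W k (x k))^j) \<partial>PiM (insert i I) M)
      \<le> ennreal ((T * (real (card I) * q + q + real j))^j)" .
    have ceq: "real (card (insert i I)) * q + real j = real (card I) * q + q + real j"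
      using insert.hyps by (simp add: algebra_simps)
    show ?case unfolding ceq by (rule fin1)
  qed
qed

theorem lemma5p7:
  fixes Mi :: "nat \<Rightarrow> 'a measure"
    and Z :: "nat \<Rightarrow> nat \<Rightarrow> 'a \<Rightarrow> real"
    and E :: "nat \<Rightarrow> 'a \<Rightarrow> real"
    and n N l :: nat and p M A :: real
  assumes n_pos: "n \<ge> 1" and N_pos: "N \<ge> 1"
    and prob: "\<And>i. i \<in> {1..n} \<Longrightarrow> prob_space (Mi i)"
    and Z_meas: "\<And>i j. i \<in> {1..n} \<Longrightarrow> j \<in> {1..N} \<Longrightarrow> Z i j \<in> borel_measurable (Mi i)"
    and E_meas: "\<And>i. i \<in> {1..n} \<Longrightarrow> E i \<in> borel_measurable (Mi i)"
    and env: "\<And>i j x. i \<in> {1..n} \<Longrightarrow> j \<in> {1..N} \<Longrightarrow> x \<in> space (Mi i) \<Longrightarrow> \<bar>Z i j x\<bar> \<le> E i x"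
    and p_ge: "p \<ge> 2" and M_pos: "M > 0"
    and moment: "\<And>i. i \<in> {1..n} \<Longrightarrow> (\<integral>\<^sup>+ x. ennreal (E i x powr p) \<partial>Mi i) \<le> ennreal (M powr p)"
    and centered: "\<And>i j. i \<in> {1..n} \<Longrightarrow> j \<in> {1..N} \<Longrightarrow> (\<integral> x. Z i j x \<partial>Mi i) = 0"
    and l_pos: "l \<ge> 1" and l_le_p: "real l \<le> p" and A_ge: "A \<ge> 2"
  shows "(\<integral>\<^sup>+ w. ennreal ((max 0 (maxmean n N Z w - A * M * ln (2 * real N) / real n)) ^ l)
            \<partial>(PiM {1..n} Mi))
         \<le> ennreal ((2 * (2 / A) powr (p - 1) + fact l powr (1 / real l) * sqrt (2 / real n)
                      + 1 / A + real l * A / real n) ^ l * M ^ l)"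
proof -
  define I where "I = {1..n}"
  define Mp where "Mp = (\<lambda>i. if i \<in> I then Mi i else return (count_space UNIV) undefined)"
  have Mp_prob: "prob_space (Mp i)" for i
    using prob by (auto simp: Mp_def I_def intro: prob_space_return)
  interpret P: product_prob_space Mp I
    by (rule product_prob_space.intro, rule product_sigma_finite.intro)
       (auto intro: prob_space_imp_sigma_finite Mp_prob simp: product_prob_space_axioms_def)
  have PiM_eq: "PiM {1..n} Mi = PiM I Mp" unfolding I_def Mp_def by (intro PiM_cong) auto
  have finI: "finite I" and cardI: "card I = n" by (auto simp: I_def)
  have n0: "real n > 0" using n_pos by simp
  have MpI: "Mp i = Mi i" if "i \<in> I" for i using that by (simp add: Mp_def)
  have A0: "A > 0" using A_ge by simp
  define T where "T = A * M / 2"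
  define q where "q = (M / T) powr p"
  define \<kappa> :: real where "\<kappa> = (if A^2 \<le> 2 * real n then 1 else 2)"
  define C :: real where "C = (if A^2 \<le> 2 * real n then 1 else 3/2)"
  define s where "s = \<kappa> / (A * M)"
  define lam where "lam = real n * s"
  define \<delta> where "\<delta> = C * s * M^2"
  define G0 where "G0 = fact l powr (1 / real l)"
  define a1 where "a1 = G0 / lam"
  define b1 where "b1 = T * (real n * q + real l) / real n"
  define r where "r = T * q"
  define k where "k = r + \<delta>"
  define S where "S = a1 + b1 + k"
  define c where "c = A * M * ln (2 * real N) / real n"
  define a where "a = (\<lambda>i j x. if E i x \<le> T then Z i j x else 0)"
  define \<mu> where "\<mu> = (\<lambda>i j. \<integral> x. a i j x \<partial>Mi i)"
  define W where "W = (\<lambda>i x. if T < E i x then E i x else 0)"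
  define Y where "Y = (\<lambda>j w. (1 / real n) * (\<Sum>i\<in>I. a i j (w i) - \<mu> i j))"
  define R where "R = (\<lambda>w. (1 / real n) * (\<Sum>i\<in>I. W i (w i)))"
  define c1 where "c1 = (a1 / S) * S^l * exp (- lam * (c + \<delta>))"
  define c2 where "c2 = (b1 / S) * (S / b1)^l"
  define c3 where "c3 = (k / S) * S^l"
  define K where "K = 2 * (2 / A) powr (p - 1) + fact l powr (1 / real l) * sqrt (2 / real n) + 1 / A + real l * A / real n"
  have T0: "T > 0" using A0 M_pos by (simp add: T_def)
  have q0: "q \<ge> 0" by (simp add: q_def)
  have \<kappa>1: "\<kappa> \<ge> 1" "\<kappa> \<le> 2" by (auto simp: \<kappa>_def)
  have C0: "C \<ge> 0" by (simp add: C_def)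
  have s0: "s > 0" using \<kappa>1 A0 M_pos by (simp add: s_def)
  have lam0: "lam > 0" using n0 s0 by (simp add: lam_def)
  have \<delta>0: "\<delta> > 0" using C_def s0 M_pos by (simp add: \<delta>_def C_def)
  have G01: "G0 \<ge> 1" unfolding G0_def by (rule ge_one_powr_ge_zero) auto
  have G0l: "G0 \<le> real l"
  proof -
    have "G0 \<le> (real l ^ l) powr (1 / real l)" unfolding G0_def
      using fact_le_power[of l, where 'a=real] by (intro powr_mono2) auto
    also have "real l ^ l = real l powr real l" using l_pos by (simp add: powr_realpow)
    also have "(real l powr real l) powr (1 / real l) = real l" using l_pos by (simp add: powr_powr)
    finally show ?thesis .
  qed
  have G0pow: "G0 ^ l = fact l"
  proof -
    have "G0 ^ l = G0 powr real l" using G01 by (simp add: powr_realpow)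
    also have "\<dots> = fact l" unfolding G0_def using l_pos by (simp add: powr_powr)
    finally show ?thesis .
  qed
  have a10: "a1 > 0" using G01 lam0 by (simp add: a1_def)
  have b10: "b1 > 0"
  proof -
    have "real n * q + real l > 0" using q0 n0 l_pos by (simp add: add_nonneg_pos)
    thus ?thesis using T0 n0 by (simp add: b1_def)
  qed
  have r0: "r \<ge> 0" using T0 q0 by (simp add: r_def)
  have k0: "k > 0" using r0 \<delta>0 by (simp add: k_def)
  have S0: "S > 0" using a10 b10 k0 by (simp add: S_def)
  have expb: "exp y \<le> 1 + y + C * y^2" if "\<bar>y\<bar> \<le> \<kappa>" for y
    using that exp_le_quad1[of y] exp_le_quad2[of y] by (auto simp: \<kappa>_def C_def split: if_splits)
  have sT: "s * (2 * T) = \<kappa>" using A0 M_pos by (simp add: s_def T_def)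
  have am: "a i j \<in> borel_measurable (Mi i)" if "i \<in> I" "j \<in> {1..N}" for i j
    unfolding a_def using Z_meas[of i j] E_meas[of i] that by (simp add: I_def) measurable
  have Wm: "W i \<in> borel_measurable (Mi i)" if "i \<in> I" for i
    unfolding W_def using E_meas[of i] that by (simp add: I_def) measurable
  have aT: "\<bar>a i j x\<bar> \<le> T" if "i \<in> I" "j \<in> {1..N}" "x \<in> space (Mi i)" for i j x
    using env[of i j x] that T0 unfolding a_def I_def by (cases "E i x \<le> T") auto
  have ZaW: "\<bar>Z i j x - a i j x\<bar> \<le> W i x" if "i \<in> I" "j \<in> {1..N}" "x \<in> space (Mi i)" for i j x
    using env[of i j x] that T0 unfolding a_def W_def I_def by auto
  have W0: "0 \<le> W i x" if "i \<in> I" "x \<in> space (Mi i)" for i x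
    using T0 unfolding W_def by auto
  have cf: "\<bar>\<mu> i j\<bar> \<le> r \<and> (\<integral> x. (a i j x)^2 \<partial>Mi i) \<le> M^2" if i: "i \<in> I" and j: "j \<in> {1..N}" for i j
  proof -
    have i': "i \<in> {1..n}" using i by (simp add: I_def)
    note cfs = coord_facts[OF prob[OF i'] Z_meas[OF i' j] E_meas[OF i'] env[OF i' j] moment[OF i'] centered[OF i' j] T0 M_pos p_ge]
    show ?thesis using cfs(1,3) unfolding a_def \<mu>_def r_def q_def by auto
  qed
  have mgf1: "(\<integral>\<^sup>+ x. ennreal (exp (\<sigma> * (a i j x - \<mu> i j))) \<partial>Mi i) \<le> ennreal (exp (C * s^2 * M^2))"
    if i: "i \<in> I" and j: "j \<in> {1..N}" and \<sigma>: "\<bar>\<sigma>\<bar> = s" for i j \<sigma>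
  proof -
    have i': "i \<in> {1..n}" using i by (simp add: I_def)
    have "(\<integral>\<^sup>+ x. ennreal (exp (\<sigma> * (a i j x - (\<integral> y. a i j y \<partial>Mi i)))) \<partial>Mi i) \<le> ennreal (exp (C * \<sigma>^2 * M^2))"
      by (rule coord_mgf[OF prob[OF i'] am[OF i j] aT[OF i j] conjunct2[OF cf[OF i j]] expb C0])
         (use \<sigma> sT in auto)
    moreover have "\<sigma>^2 = s^2" using \<sigma> by (metis power2_abs)
    ultimately show ?thesis unfolding \<mu>_def by simp
  qed
  have compm: "(\<lambda>w. f (w i)) \<in> borel_measurable (PiM I Mp)" if "i \<in> I" "f \<in> borel_measurable (Mi i)" for i f
  proof (rule measurable_compose[OF measurable_component_singleton])
    show "i \<in> I" by (rule that)
    show "f \<in> borel_measurable (Mp i)" using that by (simp add: MpI)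
  qed
  have Ym: "(\<lambda>w. Y j w) \<in> borel_measurable (PiM I Mp)" if j: "j \<in> {1..N}" for j
    unfolding Y_def
    by (intro borel_measurable_times borel_measurable_const borel_measurable_sum borel_measurable_diff compm am j) auto
  have Rm: "R \<in> borel_measurable (PiM I Mp)"
    unfolding R_def
    by (intro borel_measurable_times borel_measurable_const borel_measurable_sum compm Wm) auto
  have spw: "w i \<in> space (Mi i)" if "w \<in> space (PiM I Mp)" "i \<in> I" for w i
    using that by (auto simp: space_PiM PiE_iff MpI)
  have PY: "(\<integral>\<^sup>+ w. ennreal (exp (\<sigma> * lam * Y j w)) \<partial>PiM I Mp) \<le> ennreal (exp (C * s^2 * M^2)) ^ n"
    if j: "j \<in> {1..N}" and \<sigma>: "\<bar>\<sigma>\<bar> = 1" for j \<sigma>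
  proof -
    have "(\<integral>\<^sup>+ w. ennreal (exp (\<sigma> * lam * Y j w)) \<partial>PiM I Mp)
        = (\<integral>\<^sup>+ w. ennreal (exp (\<Sum>i\<in>I. (\<sigma> * s) * (a i j (w i) - \<mu> i j))) \<partial>PiM I Mp)"
    proof (rule nn_integral_cong)
      fix w
      have "\<sigma> * lam * Y j w = (\<sigma> * s) * (\<Sum>i\<in>I. a i j (w i) - \<mu> i j)"
        using n0 by (simp add: Y_def lam_def)
      thus "ennreal (exp (\<sigma> * lam * Y j w)) = ennreal (exp (\<Sum>i\<in>I. (\<sigma> * s) * (a i j (w i) - \<mu> i j)))"
        by (simp add: sum_distrib_left)
    qed
    also have "\<dots> \<le> ennreal (exp (C * s^2 * M^2)) ^ card I"
    proof (rule P.prod_mgf[OF finI])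
      fix i assume i: "i \<in> I"
      show "(\<lambda>x. (\<sigma> * s) * (a i j x - \<mu> i j)) \<in> borel_measurable (Mp i)"
        using am[OF i j] i by (simp add: MpI)
      show "(\<integral>\<^sup>+x. ennreal (exp ((\<sigma> * s) * (a i j x - \<mu> i j))) \<partial>Mp i) \<le> ennreal (exp (C * s^2 * M^2))"
        using mgf1[OF i j, of "\<sigma> * s"] \<sigma> s0 i by (simp add: MpI abs_mult)
    qed
    finally show ?thesis by (simp add: cardI)
  qed
  have PR: "(\<integral>\<^sup>+ w. ennreal ((R w)^l) \<partial>PiM I Mp) \<le> ennreal (b1^l)"
  proof -
    have "(\<integral>\<^sup>+ w. ennreal ((R w)^l) \<partial>PiM I Mp)
        = (\<integral>\<^sup>+ w. ennreal ((1 / real n)^l) * ennreal ((\<Sum>i\<in>I. W i (w i))^l) \<partial>PiM I Mp)"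
    proof (rule nn_integral_cong)
      fix w assume w: "w \<in> space (PiM I Mp)"
      have "0 \<le> (\<Sum>i\<in>I. W i (w i))" using W0 spw[OF w] by (intro sum_nonneg) auto
      thus "ennreal ((R w)^l) = ennreal ((1 / real n)^l) * ennreal ((\<Sum>i\<in>I. W i (w i))^l)"
      proof -
        have "(R w)^l = (1 / real n)^l * (\<Sum>i\<in>I. W i (w i))^l"
          unfolding R_def by (rule power_mult_distrib)
        thus ?thesis using \<open>0 \<le> (\<Sum>i\<in>I. W i (w i))\<close> by (simp add: ennreal_mult)
      qed
    qed
    also have "\<dots> = ennreal ((1 / real n)^l) * (\<integral>\<^sup>+ w. ennreal ((\<Sum>i\<in>I. W i (w i))^l) \<partial>PiM I Mp)"
      by (rule nn_integral_cmult)
        (intro measurable_compose[OF _ measurable_ennreal] borel_measurable_power borel_measurable_sum compm Wm; simp)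
    also have "(\<integral>\<^sup>+ w. ennreal ((\<Sum>i\<in>I. W i (w i))^l) \<partial>PiM I Mp) \<le> ennreal ((T * (real (card I) * q + real l))^l)"
    proof (rule P.sum_moment[OF finI _ _ _ less_imp_le[OF T0] q0, where L=l])
      fix i assume i: "i \<in> I"
      show "W i \<in> borel_measurable (Mp i)" using Wm[OF i] i by (simp add: MpI)
      fix x assume "x \<in> space (Mp i)"
      thus "0 \<le> W i x" using W0[OF i] i by (simp add: MpI)
    next
      fix i m assume i: "i \<in> I" and m: "1 \<le> m" "m \<le> l"
      have i': "i \<in> {1..n}" using i by (simp add: I_def)
      have "(\<integral>\<^sup>+x. ennreal (W i x ^ m) \<partial>Mi i) \<le> ennreal (T^m * (M/T) powr p)"
        unfolding W_def by (rule W_moment[OF E_meas[OF i'] moment[OF i'] T0 M_pos _ m(1)]) (use m l_le_p in auto)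
      thus "(\<integral>\<^sup>+x. ennreal (W i x ^ m) \<partial>Mp i) \<le> ennreal (T^m * q)" using i by (simp add: MpI q_def)
    qed simp
    hence "ennreal ((1 / real n)^l) * (\<integral>\<^sup>+ w. ennreal ((\<Sum>i\<in>I. W i (w i))^l) \<partial>PiM I Mp)
        \<le> ennreal ((1 / real n)^l) * ennreal ((T * (real (card I) * q + real l))^l)"
      by (rule mult_left_mono) simp
    also have "\<dots> = ennreal (b1^l)"
    proof -
      have "(1 / real n)^l * (T * (real (card I) * q + real l))^l = b1^l"
        using n0 by (simp add: b1_def cardI power_mult_distrib[symmetric] field_simps)
      moreover have "0 \<le> (T * (real (card I) * q + real l))^l" using T0 q0 by simp
      ultimately show ?thesis by (simp add: ennreal_mult[symmetric])
    qed
    finally show ?thesis .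
  qed
  define e where "e = (\<lambda>j w. exp (1 * lam * Y j w) + exp ((-1) * lam * Y j w))"
  have a1pow: "a1^l = fact l / lam^l" unfolding a1_def using G0pow by (simp add: power_divide)
  have R0: "0 \<le> R w" if w: "w \<in> space (PiM I Mp)" for w
    unfolding R_def using W0 spw[OF w] n0 by (intro mult_nonneg_nonneg sum_nonneg) auto
  have pw: "(max 0 (maxmean n N Z w - c))^l \<le> c1 * (\<Sum>j\<in>{1..N}. e j w) + c2 * (R w)^l + c3"
    if w: "w \<in> space (PiM I Mp)" for w
  proof -
    define mm where "mm = (\<lambda>j. \<bar>(1 / real n) * (\<Sum>i\<in>{1..n}. Z i j (w i))\<bar>)"
    have mmeq: "maxmean n N Z w = Max (mm ` {1..N})" by (simp add: maxmean_def mm_def)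
    have "Max (mm ` {1..N}) \<in> mm ` {1..N}" using N_pos by (intro Max_in) auto
    then obtain j0 where j0: "j0 \<in> {1..N}" and mj0: "maxmean n N Z w = mm j0" using mmeq by auto
    have bnd: "mm j0 \<le> \<bar>Y j0 w\<bar> + r + R w"
    proof -
      have split: "(\<Sum>i\<in>I. Z i j0 (w i)) = (\<Sum>i\<in>I. a i j0 (w i) - \<mu> i j0) + (\<Sum>i\<in>I. \<mu> i j0) + (\<Sum>i\<in>I. Z i j0 (w i) - a i j0 (w i))"
        by (simp add: sum_subtractf)
      have s1: "\<bar>\<Sum>i\<in>I. \<mu> i j0\<bar> \<le> real n * r"
      proof -
        have "\<bar>\<Sum>i\<in>I. \<mu> i j0\<bar> \<le> (\<Sum>i\<in>I. \<bar>\<mu> i j0\<bar>)" by (rule sum_abs)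
        also have "\<dots> \<le> (\<Sum>i\<in>I. r)" using cf j0 by (intro sum_mono) auto
        finally show ?thesis by (simp add: cardI)
      qed
      have s2: "\<bar>\<Sum>i\<in>I. Z i j0 (w i) - a i j0 (w i)\<bar> \<le> (\<Sum>i\<in>I. W i (w i))"
      proof -
        have "\<bar>\<Sum>i\<in>I. Z i j0 (w i) - a i j0 (w i)\<bar> \<le> (\<Sum>i\<in>I. \<bar>Z i j0 (w i) - a i j0 (w i)\<bar>)" by (rule sum_abs)
        also have "\<dots> \<le> (\<Sum>i\<in>I. W i (w i))" using ZaW j0 spw[OF w] by (intro sum_mono) auto
        finally show ?thesis .
      qed
      have "mm j0 = (1 / real n) * \<bar>\<Sum>i\<in>I. Z i j0 (w i)\<bar>" using n0 by (simp add: mm_def I_def abs_mult)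
      also have "\<dots> \<le> (1 / real n) * (\<bar>\<Sum>i\<in>I. a i j0 (w i) - \<mu> i j0\<bar> + real n * r + (\<Sum>i\<in>I. W i (w i)))"
        unfolding split using s1 s2 n0 by (intro mult_left_mono) (auto intro!: order.trans[OF abs_triangle_ineq] add_mono)
      also have "\<dots> = \<bar>Y j0 w\<bar> + r + R w" using n0 by (simp add: Y_def R_def abs_mult field_simps)
      finally show ?thesis .
    qed
    define F1 where "F1 = max 0 (\<bar>Y j0 w\<bar> - c - \<delta>)"
    have F10: "F1 \<ge> 0" by (simp add: F1_def)
    have m1: "max 0 (maxmean n N Z w - c) \<le> F1 + R w + k"
      using bnd mj0 R0[OF w] k0 unfolding F1_def k_def by auto
    have "(max 0 (maxmean n N Z w - c))^l \<le> (F1 + R w + k)^l"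
      by (rule power_mono[OF m1]) simp
    also have "F1 + R w + k = (a1/S) * (S * F1 / a1) + (b1/S) * (S * R w / b1) + (k/S) * S"
      using a10 b10 S0 by (simp add: field_simps)
    also have "\<dots>^l \<le> (a1/S) * (S * F1 / a1)^l + (b1/S) * (S * R w / b1)^l + (k/S) * S^l"
    proof (rule pow3_convex)
      have "a1/S + b1/S + k/S = (a1 + b1 + k) / S" by (simp add: add_divide_distrib)
      thus "a1/S + b1/S + k/S = 1" using S0 by (simp add: S_def)
    qed (use a10 b10 k0 S0 F10 R0[OF w] in auto)
    also have "(a1/S) * (S * F1 / a1)^l \<le> c1 * (\<Sum>j\<in>{1..N}. e j w)"
    proof -
      have F1l: "F1^l \<le> fact l / lam^l * exp (lam * (\<bar>Y j0 w\<bar> - c - \<delta>))"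
      proof (cases "\<bar>Y j0 w\<bar> - c - \<delta> \<ge> 0")
        case True
        hence F1e: "F1 = \<bar>Y j0 w\<bar> - c - \<delta>" by (simp add: F1_def)
        have "(lam * F1)^l / fact l \<le> exp (lam * F1)" using F10 lam0 by (intro pow_le_fact_exp) auto
        hence "lam^l * F1^l \<le> fact l * exp (lam * F1)" by (simp add: power_mult_distrib divide_le_eq mult.commute)
        hence "F1^l \<le> fact l * exp (lam * F1) / lam^l" using lam0 by (simp add: le_divide_eq mult.commute)
        thus ?thesis unfolding F1e by simp
      next
        case False
        hence "F1 = 0" by (simp add: F1_def)
        thus ?thesis using l_pos lam0 by (simp add: zero_power)
      qed
      have ey: "exp (lam * \<bar>Y j0 w\<bar>) \<le> (\<Sum>j\<in>{1..N}. e j w)"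
      proof -
        have "exp (lam * \<bar>Y j0 w\<bar>) \<le> e j0 w" unfolding e_def by (cases "Y j0 w \<ge> 0") auto
        also have "\<dots> \<le> (\<Sum>j\<in>{1..N}. e j w)"
          by (rule member_le_sum) (use j0 in \<open>auto simp: e_def intro: add_nonneg_nonneg\<close>)
        finally show ?thesis .
      qed
      have "(a1/S) * (S * F1 / a1)^l = (a1/S) * (S^l / a1^l) * F1^l" by (simp add: power_mult_distrib power_divide)
      also have "\<dots> \<le> (a1/S) * (S^l / a1^l) * (fact l / lam^l * exp (lam * (\<bar>Y j0 w\<bar> - c - \<delta>)))"
        using F1l a10 S0 by (intro mult_left_mono) auto
      also have "\<dots> = (a1/S) * S^l * exp (lam * (\<bar>Y j0 w\<bar> - c - \<delta>))"
        using a1pow a10 lam0 by (simp add: field_simps)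
      also have "\<dots> = c1 * exp (lam * \<bar>Y j0 w\<bar>)"
      proof -
        have "lam * (\<bar>Y j0 w\<bar> - c - \<delta>) = - lam * (c + \<delta>) + lam * \<bar>Y j0 w\<bar>" by (simp add: algebra_simps)
        hence "exp (lam * (\<bar>Y j0 w\<bar> - c - \<delta>)) = exp (- lam * (c + \<delta>)) * exp (lam * \<bar>Y j0 w\<bar>)"
          by (simp only: exp_add)
        thus ?thesis unfolding c1_def by (simp add: mult.assoc)
      qed
      also have "\<dots> \<le> c1 * (\<Sum>j\<in>{1..N}. e j w)"
        using ey a10 S0 by (intro mult_left_mono) (auto simp: c1_def)
      finally show ?thesis .
    qed
    also have "(b1/S) * (S * R w / b1)^l = c2 * (R w)^l" by (simp add: c2_def power_mult_distrib power_divide)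
    also have "(k/S) * S^l = c3" by (simp add: c3_def)
    finally show ?thesis by simp
  qed
  have key: "G0 * A / (real n * \<kappa>) + real l * A / (2 * real n) + C * \<kappa> / A \<le> G0 * sqrt (2 / real n) + 1 / A + real l * A / real n"
  proof (cases "A^2 \<le> 2 * real n")
    case True
    hence kc: "\<kappa> = 1" "C = 1" by (auto simp: \<kappa>_def C_def)
    have "A / real n \<le> sqrt (2 / real n)"
    proof (rule real_le_rsqrt)
      have "(A / real n)^2 = A^2 / real n ^ 2" by (simp add: power_divide)
      also have "\<dots> \<le> 2 * real n / real n ^ 2" using True n0 by (intro divide_right_mono) auto
      also have "\<dots> = 2 / real n" using n0 by (simp add: power2_eq_square)
      finally show "(A / real n)^2 \<le> 2 / real n" .
    qed
    hence "G0 * (A / real n) \<le> G0 * sqrt (2 / real n)" using G01 by (intro mult_left_mono) auto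
    moreover have "real l * A / (2 * real n) \<le> real l * A / real n" using n0 A0 by (simp add: divide_le_eq field_simps)
    ultimately show ?thesis using kc by simp
  next
    case False
    hence kc: "\<kappa> = 2" "C = 3/2" by (auto simp: \<kappa>_def C_def)
    have "2 / A \<le> sqrt (2 / real n)"
    proof (rule real_le_rsqrt)
      have "(2 / A)^2 = 4 / A^2" by (simp add: power_divide)
      also have "\<dots> \<le> 4 / (2 * real n)" using False n0 A0 by (intro divide_left_mono) auto
      also have "\<dots> = 2 / real n" by simp
      finally show "(2 / A)^2 \<le> 2 / real n" .
    qed
    also have "\<dots> \<le> G0 * sqrt (2 / real n)" using G01 by (simp add: mult_le_cancel_right1)
    finally have h1: "2 / A \<le> G0 * sqrt (2 / real n)" .
    have h2: "G0 * A / (real n * 2) \<le> real l * A / (2 * real n)"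
      using G0l A0 n0 by (simp add: divide_right_mono mult.commute mult_right_mono)
    have h3: "C * \<kappa> / A = 2 / A + 1 / A" using kc by simp
    have h4: "real l * A / (2 * real n) + real l * A / (2 * real n) = real l * A / real n" by simp
    have h5: "G0 * A / (real n * \<kappa>) = G0 * A / (real n * 2)" using kc by simp
    have gen: "\<And>x1 x2 x3 x4 x5 x6 x7 x8 :: real. x6 \<le> x5 \<Longrightarrow> x1 \<le> x2 \<Longrightarrow> x3 = x6 + x7 \<Longrightarrow> x2 + x2 = x4 \<Longrightarrow> x8 = x1 \<Longrightarrow>
        x8 + x2 + x3 \<le> x5 + x7 + x4" by linarith
    show ?thesis by (rule gen[OF h1 h2 h3 h4 h5])
  qed
  have Tq: "T * q = M * (2/A) powr (p-1)"
  proof -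
    have MT: "M / T = 2 / A" using A0 M_pos by (simp add: T_def field_simps)
    have "(2/A) powr p = (2/A) powr (p-1) * (2/A) powr 1" using powr_add[of "2/A" "p-1" 1] by simp
    also have "(2/A) powr 1 = 2/A" using A0 by simp
    finally have "q = (2/A) powr (p-1) * (2/A)" by (simp add: q_def MT)
    hence h: "T * q = (T * (2/A)) * (2/A) powr (p-1)" by (simp only: mult_ac)
    have m: "T * (2/A) = M" using A0 by (simp add: T_def)
    show ?thesis using h unfolding m .
  qed
  have SK: "S \<le> K * M"
  proof -
    have ea1: "a1 = M * (G0 * A / (real n * \<kappa>))" using A0 M_pos n0 \<kappa>1
      by (simp add: a1_def lam_def s_def field_simps)
    have eb1: "b1 = T * q + M * (real l * A / (2 * real n))" using n0
      by (simp add: b1_def T_def field_simps)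
    have ek: "k = T * q + M * (C * \<kappa> / A)" using A0 M_pos
      by (simp add: k_def r_def \<delta>_def s_def power2_eq_square field_simps)
    have "S = M * (G0 * A / (real n * \<kappa>) + real l * A / (2 * real n) + C * \<kappa> / A) + 2 * (M * (2/A) powr (p-1))"
      unfolding S_def ea1 eb1 ek Tq by (simp add: algebra_simps)
    also have "\<dots> \<le> M * (G0 * sqrt (2 / real n) + 1 / A + real l * A / real n) + 2 * (M * (2/A) powr (p-1))"
      using key M_pos by (intro add_right_mono mult_left_mono) auto
    also have "\<dots> = K * M" by (simp add: K_def G0_def algebra_simps)
    finally show ?thesis .
  qed
  define EE where "EE = exp (C * s^2 * M^2)"
  have c10: "c1 \<ge> 0" using a10 S0 by (simp add: c1_def)
  have c20: "c2 \<ge> 0" using b10 S0 by (simp add: c2_def)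
  have c30: "c3 \<ge> 0" using k0 S0 by (simp add: c3_def)
  have e0: "e j w \<ge> 0" for j w by (simp add: e_def add_nonneg_nonneg)
  have em: "(\<lambda>w. e j w) \<in> borel_measurable (PiM I Mp)" if "j \<in> {1..N}" for j
    unfolding e_def using Ym[OF that] by measurable
  have Pe: "(\<integral>\<^sup>+ w. ennreal (e j w) \<partial>PiM I Mp) \<le> ennreal (2 * EE ^ n)" if j: "j \<in> {1..N}" for j
  proof -
    have m1: "(\<lambda>w. ennreal (exp (1 * lam * Y j w))) \<in> borel_measurable (PiM I Mp)" using Ym[OF j] by measurable
    have m2: "(\<lambda>w. ennreal (exp ((-1) * lam * Y j w))) \<in> borel_measurable (PiM I Mp)" using Ym[OF j] by measurable
    have "(\<integral>\<^sup>+ w. ennreal (e j w) \<partial>PiM I Mp)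
        = (\<integral>\<^sup>+ w. ennreal (exp (1 * lam * Y j w)) + ennreal (exp ((-1) * lam * Y j w)) \<partial>PiM I Mp)"
      unfolding e_def by (intro nn_integral_cong ennreal_plus) auto
    also have "\<dots> = (\<integral>\<^sup>+ w. ennreal (exp (1 * lam * Y j w)) \<partial>PiM I Mp) + (\<integral>\<^sup>+ w. ennreal (exp ((-1) * lam * Y j w)) \<partial>PiM I Mp)"
      by (rule nn_integral_add[OF m1 m2])
    also have "\<dots> \<le> ennreal EE ^ n + ennreal EE ^ n"
      unfolding EE_def by (intro add_mono PY[OF j]) auto
    also have "\<dots> = ennreal (2 * EE ^ n)"
      by (simp add: ennreal_power EE_def ennreal_plus[symmetric] del: ennreal_plus)
    finally show ?thesis .
  qed
  have fr: "c1 * (real N * (2 * EE ^ n)) + c2 * b1^l + c3 \<le> S^l"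
  proof -
    have L0: "ln (2 * real N) \<ge> 0" using N_pos by simp
    have EEn: "EE ^ n = exp (real n * (C * s^2 * M^2))" unfolding EE_def by (simp add: exp_of_nat_mult)
    have lamc: "lam * (c + \<delta>) = \<kappa> * ln (2 * real N) + real n * (C * s^2 * M^2)"
      using n0 A0 M_pos by (simp add: lam_def c_def \<delta>_def s_def power2_eq_square field_simps)
    have "c1 * (real N * (2 * EE ^ n)) = (a1/S) * S^l * ((2 * real N) * exp (- (\<kappa> * ln (2 * real N))))"
    proof -
      have "exp (- lam * (c + \<delta>)) * EE ^ n = exp (- (\<kappa> * ln (2 * real N)))"
        unfolding EEn by (simp add: exp_add[symmetric] lamc)
      thus ?thesis unfolding c1_def by (simp add: mult_ac)
    qed
    also have "(2 * real N) * exp (- (\<kappa> * ln (2 * real N))) \<le> 1"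
    proof -
      have "(2 * real N) * exp (- (\<kappa> * ln (2 * real N))) = exp ((1 - \<kappa>) * ln (2 * real N))"
        using N_pos by (simp add: exp_diff left_diff_distrib exp_minus field_simps)
      also have "\<dots> \<le> 1" using \<kappa>1 L0 by (simp add: mult_nonpos_nonneg)
      finally show ?thesis .
    qed
    hence "(a1/S) * S^l * ((2 * real N) * exp (- (\<kappa> * ln (2 * real N)))) \<le> (a1/S) * S^l"
      using a10 S0 by (intro mult_left_le) auto
    finally have f1: "c1 * (real N * (2 * EE ^ n)) \<le> (a1/S) * S^l" .
    have f2: "c2 * b1^l = (b1/S) * S^l" using b10 by (simp add: c2_def power_divide)
    have "(a1/S) * S^l + (b1/S) * S^l + (k/S) * S^l = ((a1 + b1 + k)/S) * S^l" by (simp add: add_divide_distrib algebra_simps)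
    also have "\<dots> = S^l" using S0 by (simp add: S_def)
    finally show ?thesis using f1 f2 by (simp add: c3_def)
  qed
  have Rlm: "(\<lambda>w. ennreal ((R w)^l)) \<in> borel_measurable (PiM I Mp)" using Rm by measurable
  have sm: "(\<lambda>w. \<Sum>j\<in>{1..N}. ennreal (e j w)) \<in> borel_measurable (PiM I Mp)"
    by (intro borel_measurable_sum measurable_compose[OF em measurable_ennreal]) auto
  have "(\<integral>\<^sup>+ w. ennreal ((max 0 (maxmean n N Z w - A * M * ln (2 * real N) / real n)) ^ l) \<partial>(PiM {1..n} Mi))
      = (\<integral>\<^sup>+ w. ennreal ((max 0 (maxmean n N Z w - c)) ^ l) \<partial>(PiM I Mp))"
    unfolding PiM_eq c_def ..
  also have "\<dots> \<le> (\<integral>\<^sup>+ w. ennreal c1 * (\<Sum>j\<in>{1..N}. ennreal (e j w)) + ennreal c2 * ennreal ((R w)^l) + ennreal c3 \<partial>(PiM I Mp))"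
  proof (rule nn_integral_mono)
    fix w assume w: "w \<in> space (PiM I Mp)"
    have "ennreal ((max 0 (maxmean n N Z w - c)) ^ l) \<le> ennreal (c1 * (\<Sum>j\<in>{1..N}. e j w) + c2 * (R w)^l + c3)"
      by (rule ennreal_leI[OF pw[OF w]])
    also have "\<dots> = ennreal c1 * (\<Sum>j\<in>{1..N}. ennreal (e j w)) + ennreal c2 * ennreal ((R w)^l) + ennreal c3"
    proof -
      have s0: "0 \<le> (\<Sum>j\<in>{1..N}. e j w)" using e0 by (intro sum_nonneg) auto
      have r0: "0 \<le> (R w)^l" using R0[OF w] by simp
      have "ennreal (c1 * (\<Sum>j\<in>{1..N}. e j w) + c2 * (R w)^l + c3)
          = ennreal (c1 * (\<Sum>j\<in>{1..N}. e j w)) + ennreal (c2 * (R w)^l) + ennreal c3"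
        using c10 c20 c30 s0 r0 by (simp add: ennreal_plus)
      also have "\<dots> = ennreal c1 * ennreal (\<Sum>j\<in>{1..N}. e j w) + ennreal c2 * ennreal ((R w)^l) + ennreal c3"
        using c10 c20 s0 r0 by (simp add: ennreal_mult)
      also have "ennreal (\<Sum>j\<in>{1..N}. e j w) = (\<Sum>j\<in>{1..N}. ennreal (e j w))"
        using e0 by (simp add: sum_ennreal)
      finally show ?thesis .
    qed
    finally show "ennreal ((max 0 (maxmean n N Z w - c)) ^ l) \<le> ennreal c1 * (\<Sum>j\<in>{1..N}. ennreal (e j w)) + ennreal c2 * ennreal ((R w)^l) + ennreal c3" .
  qed
  also have "\<dots> = ennreal c1 * (\<Sum>j\<in>{1..N}. (\<integral>\<^sup>+ w. ennreal (e j w) \<partial>PiM I Mp)) + ennreal c2 * (\<integral>\<^sup>+ w. ennreal ((R w)^l) \<partial>PiM I Mp) + ennreal c3"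
  proof -
    have mA: "(\<lambda>w. ennreal c1 * (\<Sum>j\<in>{1..N}. ennreal (e j w))) \<in> borel_measurable (PiM I Mp)" using sm by measurable
    have mB: "(\<lambda>w. ennreal c2 * ennreal ((R w)^l)) \<in> borel_measurable (PiM I Mp)" using Rlm by measurable
    have "(\<integral>\<^sup>+ w. ennreal c1 * (\<Sum>j\<in>{1..N}. ennreal (e j w)) + ennreal c2 * ennreal ((R w)^l) + ennreal c3 \<partial>(PiM I Mp))
        = (\<integral>\<^sup>+ w. ennreal c1 * (\<Sum>j\<in>{1..N}. ennreal (e j w)) + ennreal c2 * ennreal ((R w)^l) \<partial>(PiM I Mp)) + (\<integral>\<^sup>+ w. ennreal c3 \<partial>(PiM I Mp))"
      by (rule nn_integral_add) (use mA mB in auto)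
    also have "(\<integral>\<^sup>+ w. ennreal c1 * (\<Sum>j\<in>{1..N}. ennreal (e j w)) + ennreal c2 * ennreal ((R w)^l) \<partial>(PiM I Mp))
        = (\<integral>\<^sup>+ w. ennreal c1 * (\<Sum>j\<in>{1..N}. ennreal (e j w)) \<partial>(PiM I Mp)) + (\<integral>\<^sup>+ w. ennreal c2 * ennreal ((R w)^l) \<partial>(PiM I Mp))"
      by (rule nn_integral_add[OF mA mB])
    also have "(\<integral>\<^sup>+ w. ennreal c1 * (\<Sum>j\<in>{1..N}. ennreal (e j w)) \<partial>(PiM I Mp)) = ennreal c1 * (\<integral>\<^sup>+ w. (\<Sum>j\<in>{1..N}. ennreal (e j w)) \<partial>(PiM I Mp))"
      by (rule nn_integral_cmult[OF sm])
    also have "(\<integral>\<^sup>+ w. (\<Sum>j\<in>{1..N}. ennreal (e j w)) \<partial>(PiM I Mp)) = (\<Sum>j\<in>{1..N}. (\<integral>\<^sup>+ w. ennreal (e j w) \<partial>PiM I Mp))"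
      by (rule nn_integral_sum) (use em in measurable)
    also have "(\<integral>\<^sup>+ w. ennreal c2 * ennreal ((R w)^l) \<partial>(PiM I Mp)) = ennreal c2 * (\<integral>\<^sup>+ w. ennreal ((R w)^l) \<partial>PiM I Mp)"
      by (rule nn_integral_cmult[OF Rlm])
    also have "(\<integral>\<^sup>+ w. ennreal c3 \<partial>(PiM I Mp)) = ennreal c3" by (simp add: P.emeasure_space_1)
    finally show ?thesis .
  qed
  also have "\<dots> \<le> ennreal c1 * (\<Sum>j\<in>{1..N}. ennreal (2 * EE ^ n)) + ennreal c2 * ennreal (b1^l) + ennreal c3"
    by (intro add_mono mult_left_mono sum_mono Pe PR order.refl) auto
  also have "\<dots> = ennreal (c1 * (real N * (2 * EE ^ n)) + c2 * b1^l + c3)"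
  proof -
    have EE0: "0 \<le> EE" by (simp add: EE_def)
    have "(\<Sum>j\<in>{1..N}. ennreal (2 * EE ^ n)) = ennreal (real N * (2 * EE ^ n))"
      using EE0 by (simp add: ennreal_of_nat_eq_real_of_nat ennreal_mult)
    moreover have "0 \<le> real N * (2 * EE ^ n)" "0 \<le> b1^l" using EE0 b10 by auto
    ultimately show ?thesis using c10 c20 c30
      by (simp add: ennreal_mult ennreal_plus)
  qed
  also have "\<dots> \<le> ennreal (S^l)" by (rule ennreal_leI[OF fr])
  also have "\<dots> \<le> ennreal (K^l * M^l)"
  proof (rule ennreal_leI)
    have "S^l \<le> (K * M)^l" by (rule power_mono[OF SK]) (use S0 in auto)
    thus "S^l \<le> K^l * M^l" by (simp add: power_mult_distrib)
  qed
  finally show ?thesis unfolding K_def .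
qed

end
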